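(* Let $G$ be a finite $p$-group, $k=\mathbb F_p$, and let $L,N$ be normal subgroups of $G$. Then (1) $\mathcal I(L)\mathcal I(N)kG+\mathcal I(N)\mathcal I(L)kG=\mathcal I([L,N])kG+\mathcal I(N)\mathcal I(L)kG$; (2) for every $n\ge1$, $\mathcal J^n(N,G)=\sum_{i=1}^{n}\mathcal I(N)^{n+1-i}\,\mathcal I(\gamma_i^G(N))kG$.
   Context: $\mathcal I(X)$ is the augmentation ideal of $kX$, viewed inside $kG$. The ideals $\mathcal J^n(N,G)$ are defined by $\mathcal J^1(N,G)=\mathcal I(N)\mathcal I(G)$ and $\mathcal J^{n+1}(N,G)=\mathcal I(N)\mathcal J^n(N,G)+\mathcal J^n(N,G)\mathcal I(N)$. The relative lower central series is $\gamma_1^G(N)=G$, $\gamma_{n+1}^G(N)=[\gamma_n^G(N),N]$. *)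

theory Defs
  imports "HOL-Algebra.Algebra"
begin

text \<open>Group algebra kG of a finite group G (HOL-Algebra structure) over a field type 'k:
  functions carrier G \<rightarrow> 'k, extended by 0 outside the carrier.\<close>

definition grp_alg :: "('g, 'b) monoid_scheme \<Rightarrow> ('g \<Rightarrow> 'k::field) set" where
  "grp_alg G = {f. \<forall>x. x \<notin> carrier G \<longrightarrow> f x = 0}"

definition ga_mult :: "('g, 'b) monoid_scheme \<Rightarrow> ('g \<Rightarrow> 'k::field) \<Rightarrow> ('g \<Rightarrow> 'k) \<Rightarrow> ('g \<Rightarrow> 'k)" where
  "ga_mult G a b = (\<lambda>x. if x \<in> carrier G
      then (\<Sum>y\<in>carrier G. a y * b (monoid.mult G (m_inv G y) x)) else 0)"

text \<open>Augmentation ideal I(X) of kX, viewed inside kG.\<close>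
definition aug_ideal :: "('g, 'b) monoid_scheme \<Rightarrow> 'g set \<Rightarrow> ('g \<Rightarrow> 'k::field) set" where
  "aug_ideal G S = {f. f \<in> grp_alg G \<and> (\<forall>x. x \<notin> S \<longrightarrow> f x = 0) \<and> sum f S = 0}"

definition sp_mult :: "('g, 'b) monoid_scheme \<Rightarrow> ('g \<Rightarrow> 'k::field) set \<Rightarrow> ('g \<Rightarrow> 'k) set \<Rightarrow> ('g \<Rightarrow> 'k) set" where
  "sp_mult G A B = {f. \<exists>(n::nat) a b. (\<forall>i<n. a i \<in> A \<and> b i \<in> B) \<and>
      f = (\<lambda>x. \<Sum>i<n. ga_mult G (a i) (b i) x)}"

definition sp_plus :: "('g \<Rightarrow> 'k::field) set \<Rightarrow> ('g \<Rightarrow> 'k) set \<Rightarrow> ('g \<Rightarrow> 'k) set" where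
  "sp_plus A B = {(\<lambda>x. a x + b x) | a b. a \<in> A \<and> b \<in> B}"

fun sp_pow :: "('g, 'b) monoid_scheme \<Rightarrow> ('g \<Rightarrow> 'k::field) set \<Rightarrow> nat \<Rightarrow> ('g \<Rightarrow> 'k) set" where
  "sp_pow G A 0 = grp_alg G"
| "sp_pow G A (Suc n) = sp_mult G A (sp_pow G A n)"

fun sp_sum :: "(nat \<Rightarrow> ('g \<Rightarrow> 'k::field) set) \<Rightarrow> nat \<Rightarrow> ('g \<Rightarrow> 'k) set" where
  "sp_sum f 0 = {(\<lambda>x. 0)}"
| "sp_sum f (Suc n) = sp_plus (sp_sum f n) (f (Suc n))"

definition comm_subgroup :: "('g, 'b) monoid_scheme \<Rightarrow> 'g set \<Rightarrow> 'g set \<Rightarrow> 'g set" where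
  "comm_subgroup G A B = generate G
     {monoid.mult G (monoid.mult G (monoid.mult G x y) (m_inv G x)) (m_inv G y) | x y. x \<in> A \<and> y \<in> B}"

text \<open>Relative lower central series, indexed from 1 (index 0 is a junk value).\<close>
fun rel_lcs :: "('g, 'b) monoid_scheme \<Rightarrow> 'g set \<Rightarrow> nat \<Rightarrow> 'g set" where
  "rel_lcs G N 0 = carrier G"
| "rel_lcs G N (Suc 0) = carrier G"
| "rel_lcs G N (Suc (Suc n)) = comm_subgroup G (rel_lcs G N (Suc n)) N"

text \<open>The ideals J^n(N,G), indexed from 1 (index 0 is a junk value).\<close>
fun rel_J :: "('g, 'b) monoid_scheme \<Rightarrow> 'g set \<Rightarrow> nat \<Rightarrow> ('g \<Rightarrow> 'k::field) set" where
  "rel_J G N 0 = grp_alg G"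
| "rel_J G N (Suc 0) = sp_mult G (aug_ideal G N) (aug_ideal G (carrier G))"
| "rel_J G N (Suc (Suc n)) = sp_plus (sp_mult G (aug_ideal G N) (rel_J G N (Suc n)))
                                      (sp_mult G (rel_J G N (Suc n)) (aug_ideal G N))"

end

theory Submission
  imports Defs "HOL-Library.Function_Algebras"
begin



declare plus_fun_apply[simp del] zero_fun_apply[simp del] minus_apply[simp del] uminus_apply[simp del]
lemmas fun_ops_apply = plus_fun_apply zero_fun_apply minus_apply uminus_apply

lemma sum_fun_apply: "(sum f A) x = (\<Sum>a\<in>A. f a x)"
  by (induction A rule: infinite_finite_induct) (auto simp: fun_ops_apply)

definition sc :: "'k::field \<Rightarrow> ('g \<Rightarrow> 'k) \<Rightarrow> ('g \<Rightarrow> 'k)" where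
  "sc c f = (\<lambda>x. c * f x)"

definition dl :: "('g, 'b) monoid_scheme \<Rightarrow> 'g \<Rightarrow> ('g \<Rightarrow> 'k::field)" where
  "dl G g = (\<lambda>x. if x = g then 1 else 0)"

definition addcl :: "('g \<Rightarrow> 'k::field) set \<Rightarrow> bool" where
  "addcl C \<longleftrightarrow> 0 \<in> C \<and> (\<forall>x\<in>C. \<forall>y\<in>C. x + y \<in> C)"

definition scl :: "('g \<Rightarrow> 'k::field) set \<Rightarrow> bool" where
  "scl C \<longleftrightarrow> (\<forall>c. \<forall>x\<in>C. sc c x \<in> C)"

lemma ga_add_left: "ga_mult G (f + g) h = ga_mult G f h + ga_mult G g h"
  by (auto simp: ga_mult_def fun_eq_iff fun_ops_apply distrib_right sum.distrib)
lemma ga_add_right: "ga_mult G h (f + g) = ga_mult G h f + ga_mult G h g"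
  by (auto simp: ga_mult_def fun_eq_iff fun_ops_apply distrib_left sum.distrib)
lemma ga_diff_left: "ga_mult G (f - g) h = ga_mult G f h - ga_mult G g h"
  by (auto simp: ga_mult_def fun_eq_iff fun_ops_apply left_diff_distrib sum_subtractf)
lemma ga_diff_right: "ga_mult G h (f - g) = ga_mult G h f - ga_mult G h g"
  by (auto simp: ga_mult_def fun_eq_iff fun_ops_apply right_diff_distrib sum_subtractf)
lemma ga_zero_left[simp]: "ga_mult G 0 h = 0"
  by (auto simp: ga_mult_def fun_eq_iff fun_ops_apply)
lemma ga_zero_right[simp]: "ga_mult G h 0 = 0"
  by (auto simp: ga_mult_def fun_eq_iff fun_ops_apply)
lemma ga_sc_left: "ga_mult G (sc c f) h = sc c (ga_mult G f h)"
  by (auto simp: ga_mult_def fun_eq_iff fun_ops_apply sc_def sum_distrib_left mult.assoc)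
lemma ga_sc_right: "ga_mult G f (sc c h) = sc c (ga_mult G f h)"
  by (auto simp: ga_mult_def fun_eq_iff fun_ops_apply sc_def sum_distrib_left mult.left_commute)
lemma ga_sum_left: "ga_mult G (sum f A) h = (\<Sum>a\<in>A. ga_mult G (f a) h)"
proof (induction A rule: infinite_finite_induct)
  case (insert x F)
  show ?case
    by (simp only: sum.insert[OF insert(1,2)] ga_add_left insert(3))
qed (auto simp: ga_mult_def fun_eq_iff fun_ops_apply)
lemma ga_sum_right: "ga_mult G h (sum f A) = (\<Sum>a\<in>A. ga_mult G h (f a))"
proof (induction A rule: infinite_finite_induct)
  case (insert x F)
  show ?case
    by (simp only: sum.insert[OF insert(1,2)] ga_add_right insert(3))
qed (auto simp: ga_mult_def fun_eq_iff fun_ops_apply)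
lemma ga_in: "ga_mult G f h \<in> grp_alg G"
  by (auto simp: ga_mult_def grp_alg_def)

lemma sc_add: "sc c (f + g) = sc c f + sc c g" by (auto simp: sc_def fun_eq_iff fun_ops_apply distrib_left)
lemma sc_sc: "sc c (sc d f) = sc (c*d) f" by (auto simp: sc_def fun_eq_iff fun_ops_apply)
lemma sc_sum: "sc c (sum f A) = (\<Sum>a\<in>A. sc c (f a))"
proof (induction A rule: infinite_finite_induct)
  case (insert x F)
  show ?case
    by (simp only: sum.insert[OF insert(1,2)] sc_add insert(3))
qed (auto simp: sc_def fun_eq_iff fun_ops_apply)
lemma sc_zero[simp]: "sc c 0 = 0" by (auto simp: sc_def fun_eq_iff fun_ops_apply)
lemma sc_m1: "sc (-1) f = - f" by (auto simp: sc_def fun_eq_iff fun_ops_apply)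

context group begin

lemma cancel_aux: "a \<in> carrier G \<Longrightarrow> z \<in> carrier G \<Longrightarrow> x \<in> carrier G \<Longrightarrow> a \<otimes> z \<otimes> inv z \<otimes> x = a \<otimes> x"
  by (simp add: m_assoc[symmetric] r_inv[symmetric] del: r_inv) (simp add: m_assoc)

lemma ga_assoc:
  assumes fin: "finite (carrier G)"
  shows "ga_mult G (ga_mult G a b) c = ga_mult G a (ga_mult G b c)"
proof (rule ext)
  fix x
  show "ga_mult G (ga_mult G a b) c x = ga_mult G a (ga_mult G b c) x"
  proof (cases "x \<in> carrier G")
    case False thus ?thesis by (simp add: ga_mult_def)
  next
    case True
    have "ga_mult G (ga_mult G a b) c x = (\<Sum>y\<in>carrier G. \<Sum>z\<in>carrier G. a z * b (inv z \<otimes> y) * c (inv y \<otimes> x))"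
      by (simp add: ga_mult_def True sum_distrib_right)
    also have "\<dots> = (\<Sum>z\<in>carrier G. \<Sum>y\<in>carrier G. a z * b (inv z \<otimes> y) * c (inv y \<otimes> x))"
      by (rule sum.swap)
    also have "\<dots> = (\<Sum>z\<in>carrier G. \<Sum>w\<in>carrier G. a z * b w * c (inv w \<otimes> (inv z \<otimes> x)))"
    proof (rule sum.cong[OF refl])
      fix z assume z: "z \<in> carrier G"
      show "(\<Sum>y\<in>carrier G. a z * b (inv z \<otimes> y) * c (inv y \<otimes> x)) =
            (\<Sum>w\<in>carrier G. a z * b w * c (inv w \<otimes> (inv z \<otimes> x)))"
        by (rule sum.reindex_bij_witness[where i="\<lambda>w. z \<otimes> w" and j="\<lambda>y. inv z \<otimes> y"])
           (use z True in \<open>auto simp: m_assoc[symmetric] inv_mult_group cancel_aux\<close>)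
    qed
    also have "\<dots> = ga_mult G a (ga_mult G b c) x"
      by (simp add: ga_mult_def True sum_distrib_left mult.assoc)
    finally show ?thesis .
  qed
qed

lemma inv_one_iff: "x \<in> carrier G \<Longrightarrow> y \<in> carrier G \<Longrightarrow> (inv y \<otimes> x = \<one>) = (y = x)"
  by (metis inv_solve_left one_closed r_one)

lemma dl_in: "g \<in> carrier G \<Longrightarrow> dl G g \<in> grp_alg G"
  by (auto simp: dl_def grp_alg_def)

lemma ga_dl_dl:
  assumes fin: "finite (carrier G)" and g: "g \<in> carrier G" and h: "h \<in> carrier G"
  shows "ga_mult G (dl G g) (dl G h) = dl G (g \<otimes> h)"
proof (rule ext)
  fix x
  show "ga_mult G (dl G g) (dl G h) x = dl G (g \<otimes> h) x"
  proof (cases "x \<in> carrier G")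
    case False thus ?thesis using g h by (auto simp: ga_mult_def dl_def)
  next
    case True
    have "ga_mult G (dl G g) (dl G h) x = (\<Sum>y\<in>carrier G. if y = g then dl G h (inv g \<otimes> x) else 0)"
      unfolding ga_mult_def using True by (auto intro!: sum.cong simp: dl_def)
    also have "\<dots> = dl G h (inv g \<otimes> x)" using fin g by (simp add: sum.delta)
    also have "\<dots> = dl G (g \<otimes> h) x"
      using g h True unfolding dl_def
      by (metis inv_closed inv_solve_left m_assoc m_closed r_inv r_one)
    finally show ?thesis .
  qed
qed

lemma ga_one_right:
  assumes fin: "finite (carrier G)" and f: "f \<in> grp_alg G"
  shows "ga_mult G f (dl G \<one>) = f"
proof (rule ext)
  fix x
  show "ga_mult G f (dl G \<one>) x = f x"
  proof (cases "x \<in> carrier G")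
    case False thus ?thesis using f by (auto simp: ga_mult_def grp_alg_def)
  next
    case True
    have "ga_mult G f (dl G \<one>) x = (\<Sum>y\<in>carrier G. if y = x then f y else 0)"
      unfolding ga_mult_def dl_def using True
      by (auto intro!: sum.cong simp: inv_one_iff)
    also have "\<dots> = f x" using fin True by (simp add: sum.delta')
    finally show ?thesis .
  qed
qed

lemma ga_one_left:
  assumes fin: "finite (carrier G)" and f: "f \<in> grp_alg G"
  shows "ga_mult G (dl G \<one>) f = f"
proof (rule ext)
  fix x
  show "ga_mult G (dl G \<one>) f x = f x"
  proof (cases "x \<in> carrier G")
    case False thus ?thesis using f by (auto simp: ga_mult_def grp_alg_def)
  next
    case True
    have "ga_mult G (dl G \<one>) f x = (\<Sum>y\<in>carrier G. if y = \<one> then f x else 0)"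
      unfolding ga_mult_def dl_def using True by (auto intro!: sum.cong)
    also have "\<dots> = f x" using fin by (simp add: sum.delta)
    finally show ?thesis .
  qed
qed

end



lemma sp_multE:
  assumes "f \<in> sp_mult G A B"
  obtains n :: nat and a b where "\<forall>i<n. a i \<in> A \<and> b i \<in> B" "f = (\<lambda>x. \<Sum>i<n. ga_mult G (a i) (b i) x)"
  using assms unfolding sp_mult_def by blast

lemma sp_mult_zero: "0 \<in> sp_mult G A B"
  unfolding sp_mult_def by (rule CollectI, rule exI[of _ 0]) (auto simp: zero_fun_def)

lemma sp_mult_add_prod:
  assumes "f \<in> sp_mult G A B" "a0 \<in> A" "b0 \<in> B"
  shows "f + ga_mult G a0 b0 \<in> sp_mult G A B"
proof -
  obtain n :: nat and a b where ab: "\<forall>i<n. a i \<in> A \<and> b i \<in> B" and f: "f = (\<lambda>x. \<Sum>i<n. ga_mult G (a i) (b i) x)"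
    using assms(1) unfolding sp_mult_def by blast
  let ?a = "a(n := a0)" and ?b = "b(n := b0)"
  have "\<forall>i<Suc n. ?a i \<in> A \<and> ?b i \<in> B" using ab assms by (auto simp: less_Suc_eq)
  moreover have "f + ga_mult G a0 b0 = (\<lambda>x. \<Sum>i<Suc n. ga_mult G (?a i) (?b i) x)"
    unfolding f by (auto simp: fun_eq_iff fun_ops_apply intro!: sum.cong)
  ultimately show ?thesis unfolding sp_mult_def by blast
qed

lemma sp_mult_prod: "a \<in> A \<Longrightarrow> b \<in> B \<Longrightarrow> ga_mult G a b \<in> sp_mult G A B"
  using sp_mult_add_prod[OF sp_mult_zero] by fastforce

lemma sp_mult_induct[consumes 1, case_names zero prod add]:
  assumes f: "f \<in> sp_mult G A B"
    and z: "P 0" and p: "\<And>a b. a \<in> A \<Longrightarrow> b \<in> B \<Longrightarrow> P (ga_mult G a b)"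
    and ad: "\<And>f g. P f \<Longrightarrow> P g \<Longrightarrow> P (f + g)"
  shows "P f"
proof -
  obtain n :: nat and a b where ab: "\<forall>i<n. a i \<in> A \<and> b i \<in> B" and f: "f = (\<lambda>x. \<Sum>i<n. ga_mult G (a i) (b i) x)"
    using assms(1) unfolding sp_mult_def by blast
  have "P (\<lambda>x. \<Sum>i<m. ga_mult G (a i) (b i) x)" if "m \<le> n" for m
    using that
  proof (induction m)
    case 0 thus ?case using z by (simp add: zero_fun_def)
  next
    case (Suc m)
    have "(\<lambda>x. \<Sum>i<Suc m. ga_mult G (a i) (b i) x) =
          (\<lambda>x. \<Sum>i<m. ga_mult G (a i) (b i) x) + ga_mult G (a m) (b m)"
      by (simp add: fun_eq_iff plus_fun_apply)
    thus ?case using Suc ab ad p by simp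
  qed
  thus ?thesis using f by simp
qed

lemma sp_mult_add: "f \<in> sp_mult G A B \<Longrightarrow> g \<in> sp_mult G A B \<Longrightarrow> f + g \<in> sp_mult G A B"
proof -
  assume g: "g \<in> sp_mult G A B"
  have "\<forall>f\<in>sp_mult G A B. f + g \<in> sp_mult G A B"
    using g
  proof (induction g rule: sp_mult_induct)
    case zero thus ?case by simp
  next
    case (prod a b) thus ?case by (auto intro: sp_mult_add_prod)
  next
    case (add g h)
    show ?case
    proof
      fix f assume "f \<in> sp_mult G A B"
      hence "f + g + h \<in> sp_mult G A B" using add by blast
      thus "f + (g + h) \<in> sp_mult G A B" by (simp add: add.assoc)
    qed
  qed
  thus "f \<in> sp_mult G A B \<Longrightarrow> f + g \<in> sp_mult G A B" by blast
qed


lemma addcl_sp_mult: "addcl (sp_mult G A B)"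
  unfolding addcl_def using sp_mult_zero sp_mult_add by blast

lemma addclD: "addcl C \<Longrightarrow> 0 \<in> C" "addcl C \<Longrightarrow> x \<in> C \<Longrightarrow> y \<in> C \<Longrightarrow> x + y \<in> C"
  unfolding addcl_def by auto

lemma sp_mult_least:
  assumes "addcl C" "\<And>a b. a \<in> A \<Longrightarrow> b \<in> B \<Longrightarrow> ga_mult G a b \<in> C"
  shows "sp_mult G A B \<subseteq> C"
proof
  fix f assume "f \<in> sp_mult G A B"
  thus "f \<in> C"
    by (induction f rule: sp_mult_induct) (use assms in \<open>auto intro: addclD\<close>)
qed

lemma sp_mult_mono: "A \<subseteq> A' \<Longrightarrow> B \<subseteq> B' \<Longrightarrow> sp_mult G A B \<subseteq> sp_mult G A' B'"
  by (rule sp_mult_least[OF addcl_sp_mult]) (auto intro: sp_mult_prod)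

lemma addcl_sum:
  assumes "addcl C" "finite F" "\<And>i. i \<in> F \<Longrightarrow> v i \<in> C"
  shows "sum v F \<in> C"
  using assms(2,3)
proof (induction F rule: finite_induct)
  case empty thus ?case using assms(1) by (simp add: addclD)
next
  case (insert x F)
  have "sum v (insert x F) = v x + sum v F" by (simp only: sum.insert[OF insert(1,2)])
  thus ?case using insert assms(1) by (simp add: addclD)
qed

lemma scl_sp_mult: "scl B \<Longrightarrow> scl (sp_mult G A B)"
  unfolding scl_def
proof (intro allI ballI)
  fix c f assume B: "\<forall>c. \<forall>x\<in>B. sc c x \<in> B" and f: "f \<in> sp_mult G A B"
  from f show "sc c f \<in> sp_mult G A B"
  proof (induction f rule: sp_mult_induct)
    case zero thus ?case by (simp add: sp_mult_zero)
  next
    case (prod a b) thus ?case using B by (simp add: ga_sc_right[symmetric] sp_mult_prod)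
  next
    case (add f g) thus ?case by (simp add: sc_add sp_mult_add)
  qed
qed

lemma scl_sum:
  assumes "addcl C" "scl C" "finite F" "\<And>i. i \<in> F \<Longrightarrow> v i \<in> C"
  shows "(\<Sum>i\<in>F. sc (c i) (v i)) \<in> C"
  using assms by (intro addcl_sum) (auto simp: scl_def)

lemma sp_plus_eq: "sp_plus A B = {a + b | a b. a \<in> A \<and> b \<in> B}"
  unfolding sp_plus_def plus_fun_def ..

lemma sp_plus_I: "a \<in> A \<Longrightarrow> b \<in> B \<Longrightarrow> a + b \<in> sp_plus A B"
  unfolding sp_plus_eq by blast

lemma sp_plusE: "x \<in> sp_plus A B \<Longrightarrow> (\<And>a b. a \<in> A \<Longrightarrow> b \<in> B \<Longrightarrow> x = a + b \<Longrightarrow> P) \<Longrightarrow> P"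
  unfolding sp_plus_eq by blast

lemma addcl_sp_plus:
  assumes "addcl A" "addcl B" shows "addcl (sp_plus A B)"
  unfolding addcl_def
proof (intro conjI ballI)
  show "0 \<in> sp_plus A B" using sp_plus_I[of 0 A 0 B] assms by (simp add: addclD)
  fix x y assume "x \<in> sp_plus A B" "y \<in> sp_plus A B"
  then obtain a1 b1 a2 b2 where "a1 \<in> A" "b1 \<in> B" "a2 \<in> A" "b2 \<in> B" "x = a1 + b1" "y = a2 + b2"
    unfolding sp_plus_eq by blast
  moreover have "a1 + b1 + (a2 + b2) = (a1 + a2) + (b1 + b2)" by (simp add: algebra_simps)
  ultimately show "x + y \<in> sp_plus A B" using assms by (metis sp_plus_I addclD(2))
qed

lemma scl_sp_plus:
  assumes "scl A" "scl B" shows "scl (sp_plus A B)"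
  using assms unfolding scl_def by (auto elim!: sp_plusE simp: sc_add intro!: sp_plus_I)

lemma sp_plus_least: "addcl C \<Longrightarrow> A \<subseteq> C \<Longrightarrow> B \<subseteq> C \<Longrightarrow> sp_plus A B \<subseteq> C"
  unfolding sp_plus_eq by (auto intro: addclD)

lemma sp_plus_ge1: "0 \<in> B \<Longrightarrow> A \<subseteq> sp_plus A B"
  using sp_plus_I[of _ A 0 B] by auto

lemma sp_plus_ge2: "0 \<in> A \<Longrightarrow> B \<subseteq> sp_plus A B"
  using sp_plus_I[of 0 A _ B] by auto

lemma sp_plus_mono: "A \<subseteq> A' \<Longrightarrow> B \<subseteq> B' \<Longrightarrow> sp_plus A B \<subseteq> sp_plus A' B'"
  unfolding sp_plus_eq by blast

lemma sp_mult_plus_right: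
  "sp_mult G A (sp_plus B C) \<subseteq> sp_plus (sp_mult G A B) (sp_mult G A C)"
  by (rule sp_mult_least[OF addcl_sp_plus[OF addcl_sp_mult addcl_sp_mult]])
     (erule sp_plusE, simp add: ga_add_right sp_plus_I sp_mult_prod)

lemma sp_mult_plus_left:
  "sp_mult G (sp_plus B C) A \<subseteq> sp_plus (sp_mult G B A) (sp_mult G C A)"
  by (rule sp_mult_least[OF addcl_sp_plus[OF addcl_sp_mult addcl_sp_mult]])
     (erule sp_plusE, simp add: ga_add_left sp_plus_I sp_mult_prod)

lemma (in group) sp_mult_assoc:
  assumes fin: "finite (carrier G)"
  shows "sp_mult G (sp_mult G A B) C = sp_mult G A (sp_mult G B C)"
proof
  show "sp_mult G (sp_mult G A B) C \<subseteq> sp_mult G A (sp_mult G B C)"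
  proof (rule sp_mult_least[OF addcl_sp_mult])
    fix x c assume x: "x \<in> sp_mult G A B" and c: "c \<in> C"
    from x show "ga_mult G x c \<in> sp_mult G A (sp_mult G B C)"
    proof (induction x rule: sp_mult_induct)
      case zero thus ?case by (simp add: sp_mult_zero)
    next
      case (prod a b) thus ?case using c by (simp add: ga_assoc[OF fin] sp_mult_prod)
    next
      case (add f g) thus ?case by (simp add: ga_add_left sp_mult_add)
    qed
  qed
  show "sp_mult G A (sp_mult G B C) \<subseteq> sp_mult G (sp_mult G A B) C"
  proof (rule sp_mult_least[OF addcl_sp_mult])
    fix a x assume a: "a \<in> A" and x: "x \<in> sp_mult G B C"
    from x show "ga_mult G a x \<in> sp_mult G (sp_mult G A B) C"
    proof (induction x rule: sp_mult_induct)
      case zero thus ?case by (simp add: sp_mult_zero)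
    next
      case (prod b c) thus ?case using a by (simp add: ga_assoc[OF fin, symmetric] sp_mult_prod)
    next
      case (add f g) thus ?case by (simp add: ga_add_right sp_mult_add)
    qed
  qed
qed




definition ee :: "('g, 'b) monoid_scheme \<Rightarrow> 'g \<Rightarrow> ('g \<Rightarrow> 'k::field)" where
  "ee G h = dl G h - dl G \<one>\<^bsub>G\<^esub>"

lemma addcl_grp_alg: "addcl (grp_alg G)"
  unfolding addcl_def grp_alg_def by (auto simp: fun_ops_apply)
lemma scl_grp_alg: "scl (grp_alg G)"
  unfolding scl_def grp_alg_def sc_def by auto
lemma addcl_aug: "addcl (aug_ideal G H)"
  unfolding addcl_def aug_ideal_def grp_alg_def by (auto simp: fun_ops_apply sum.distrib)
lemma scl_aug: "scl (aug_ideal G H)"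
  unfolding scl_def aug_ideal_def grp_alg_def sc_def by (auto simp: sum_distrib_left[symmetric])
lemma aug_sub: "aug_ideal G H \<subseteq> grp_alg G"
  unfolding aug_ideal_def by auto

lemma sum_delta_mult:
  assumes "finite H"
  shows "(\<Sum>h\<in>H. f h * (if x = h then 1 else 0)) = (if x \<in> H then f x else (0::'k::field))"
proof -
  have "(\<Sum>h\<in>H. f h * (if x = h then 1 else 0)) = (\<Sum>h\<in>H. if x = h then f x else 0)"
    by (rule sum.cong) auto
  thus ?thesis using assms by (simp add: sum.delta)
qed

context group begin

lemma inv_cancel_left: "a \<in> carrier G \<Longrightarrow> b \<in> carrier G \<Longrightarrow> inv a \<otimes> (a \<otimes> b) = b"
  by (simp add: m_assoc[symmetric])
lemma inv_cancel_left2: "a \<in> carrier G \<Longrightarrow> b \<in> carrier G \<Longrightarrow> a \<otimes> (inv a \<otimes> b) = b"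
  by (simp add: m_assoc[symmetric])

lemma ee_in_aug:
  assumes fin: "finite (carrier G)" and "H \<subseteq> carrier G" "\<one> \<in> H" "h \<in> H"
  shows "ee G h \<in> aug_ideal G H"
proof -
  have fH: "finite H" using assms finite_subset by blast
  show ?thesis
    using assms fH unfolding aug_ideal_def grp_alg_def ee_def dl_def
    by (auto simp: fun_ops_apply sum_subtractf sum.delta)
qed

lemma ee_one[simp]: "ee G \<one> = 0"
  by (simp add: ee_def)

lemma aug_expand:
  assumes fin: "finite (carrier G)" and H: "H \<subseteq> carrier G" and a: "a \<in> aug_ideal G H"
  shows "a = (\<Sum>h\<in>H. sc (a h) (ee G h))"
proof (rule ext)
  fix x
  have fH: "finite H" using assms finite_subset by blast
  have s0: "sum a H = 0" and sup: "\<And>x. x \<notin> H \<Longrightarrow> a x = 0" using a unfolding aug_ideal_def by auto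
  have "(\<Sum>h\<in>H. sc (a h) (ee G h)) x = (\<Sum>h\<in>H. a h * dl G h x) - (\<Sum>h\<in>H. a h) * dl G \<one> x"
    by (simp add: sum_fun_apply sc_def ee_def fun_ops_apply right_diff_distrib sum_subtractf sum_distrib_right)
  also have "\<dots> = (\<Sum>h\<in>H. a h * dl G h x)" using s0 by simp
  also have "\<dots> = a x" using fH sup unfolding dl_def by (cases "x \<in> H") (auto simp: sum_delta_mult)
  finally show "a x = (\<Sum>h\<in>H. sc (a h) (ee G h)) x" by simp
qed

lemma R_expand:
  assumes fin: "finite (carrier G)" and a: "a \<in> grp_alg G"
  shows "a = (\<Sum>h\<in>carrier G. sc (a h) (dl G h))"
proof (rule ext)
  fix x
  have sup: "\<And>x. x \<notin> carrier G \<Longrightarrow> a x = 0" using a unfolding grp_alg_def by auto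
  have "(\<Sum>h\<in>carrier G. sc (a h) (dl G h)) x = (\<Sum>h\<in>carrier G. a h * dl G h x)"
    by (simp add: sum_fun_apply sc_def)
  also have "\<dots> = a x" using fin sup unfolding dl_def by (cases "x \<in> carrier G") (auto simp: sum_delta_mult)
  finally show "a x = (\<Sum>h\<in>carrier G. sc (a h) (dl G h)) x" by simp
qed

lemma ee_dl:
  assumes fin: "finite (carrier G)" and "h \<in> carrier G" "g \<in> carrier G"
  shows "ga_mult G (ee G h) (dl G g) = dl G (h \<otimes> g) - dl G g"
  using assms by (simp add: ee_def ga_diff_left ga_dl_dl)

lemma ee_ee:
  assumes fin: "finite (carrier G)" and "l \<in> carrier G" "n \<in> carrier G"
  shows "ga_mult G (ee G l) (ee G n) = dl G (l \<otimes> n) - dl G l - dl G n + dl G \<one>"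
  using assms by (simp add: ee_def ga_diff_left ga_diff_right ga_dl_dl algebra_simps)

lemma comm_id:
  assumes fin: "finite (carrier G)" and l: "l \<in> carrier G" and n: "n \<in> carrier G"
  shows "ga_mult G (ee G l) (ee G n) - ga_mult G (ee G n) (ee G l)
       = ga_mult G (ee G (l \<otimes> n \<otimes> inv l \<otimes> inv n)) (dl G (n \<otimes> l))"
proof -
  have "l \<otimes> n \<otimes> inv l \<otimes> inv n \<otimes> (n \<otimes> l) = l \<otimes> n"
    using l n by (simp add: m_assoc inv_cancel_left)
  thus ?thesis using assms by (simp add: ee_ee ee_dl algebra_simps)
qed

lemma ee_mult:
  assumes fin: "finite (carrier G)" and "h1 \<in> carrier G" "h2 \<in> carrier G"
  shows "ee G (h1 \<otimes> h2) = ga_mult G (ee G h1) (dl G h2) + ee G h2"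
  using assms by (simp add: ee_dl) (simp add: ee_def)

lemma ee_inv:
  assumes fin: "finite (carrier G)" and "h \<in> carrier G"
  shows "ee G (inv h) = - ga_mult G (ee G h) (dl G (inv h))"
  using assms by (simp add: ee_dl) (simp add: ee_def)

end



context group begin

lemma comm_set_sub:
  assumes "L \<subseteq> carrier G" "N \<subseteq> carrier G"
  shows "{x \<otimes> y \<otimes> inv x \<otimes> inv y | x y. x \<in> L \<and> y \<in> N} \<subseteq> carrier G"
  using assms by (blast intro: m_closed inv_closed)

lemma comm_subgroup_sub:
  assumes "L \<subseteq> carrier G" "N \<subseteq> carrier G"
  shows "subgroup (comm_subgroup G L N) G"
  unfolding comm_subgroup_def using generate_is_subgroup[OF comm_set_sub[OF assms]] .

lemma part1:
  assumes fin: "finite (carrier G)" and L: "subgroup L G" and N: "subgroup N G"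
  shows "sp_plus (sp_mult G (sp_mult G (aug_ideal G L :: ('a \<Rightarrow> 'k::field) set) (aug_ideal G N)) (grp_alg G))
                 (sp_mult G (sp_mult G (aug_ideal G N) (aug_ideal G L)) (grp_alg G))
       = sp_plus (sp_mult G (aug_ideal G (comm_subgroup G L N)) (grp_alg G))
                 (sp_mult G (sp_mult G (aug_ideal G N) (aug_ideal G L)) (grp_alg G))"
proof -
  define R where "R = (grp_alg G :: ('a \<Rightarrow> 'k) set)"
  define IL where "IL = (aug_ideal G L :: ('a \<Rightarrow> 'k) set)"
  define IN where "IN = (aug_ideal G N :: ('a \<Rightarrow> 'k) set)"
  define Xs where "Xs = sp_mult G (sp_mult G IL IN) R"
  define Ys where "Ys = sp_mult G (sp_mult G IN IL) R"
  define S where "S = {x \<otimes> y \<otimes> inv x \<otimes> inv y | x y. x \<in> L \<and> y \<in> N}"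
  define C where "C = comm_subgroup G L N"
  define Zs where "Zs = sp_mult G (aug_ideal G C) R"
  have Lc: "L \<subseteq> carrier G" and Nc: "N \<subseteq> carrier G" using L N subgroup.subset by blast+
  have L1: "\<one> \<in> L" and N1: "\<one> \<in> N" using L N subgroup.one_closed by blast+
  have CS: "C = generate G S" unfolding C_def S_def comm_subgroup_def ..
  have Cc: "C \<subseteq> carrier G" and C1: "\<one> \<in> C"
    using comm_subgroup_sub[OF Lc Nc] subgroup.subset subgroup.one_closed unfolding C_def by blast+
  have sclR: "scl R" unfolding R_def by (rule scl_grp_alg)
  have aX: "addcl Xs" "scl Xs" unfolding Xs_def using addcl_sp_mult scl_sp_mult[OF sclR] by blast+
  have aY: "addcl Ys" "scl Ys" unfolding Ys_def using addcl_sp_mult scl_sp_mult[OF sclR] by blast+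
  have aZ: "addcl Zs" "scl Zs" unfolding Zs_def using addcl_sp_mult scl_sp_mult[OF sclR] by blast+
  have aW1: "addcl (sp_plus Zs Ys)" "scl (sp_plus Zs Ys)"
    using addcl_sp_plus scl_sp_plus aZ aY by blast+
  have aW2: "addcl (sp_plus Xs Ys)" "scl (sp_plus Xs Ys)"
    using addcl_sp_plus scl_sp_plus aX aY by blast+
  have inR: "\<And>f g. ga_mult G f g \<in> R" unfolding R_def by (rule ga_in)
  have eeL: "\<And>l. l \<in> L \<Longrightarrow> ee G l \<in> IL" unfolding IL_def using ee_in_aug[OF fin Lc L1] .
  have eeN: "\<And>l. l \<in> N \<Longrightarrow> ee G l \<in> IN" unfolding IN_def using ee_in_aug[OF fin Nc N1] .
  have eeC: "\<And>l. l \<in> C \<Longrightarrow> ee G l \<in> aug_ideal G C" using ee_in_aug[OF fin Cc C1] .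
  have SC: "S \<subseteq> C" unfolding CS by (auto intro: generate.incl)
  have key1: "ga_mult G (ga_mult G (ee G l) (ee G n)) r \<in> sp_plus Zs Ys"
    if l: "l \<in> L" and n: "n \<in> N" and r: "r \<in> R" for l n r
  proof -
    have lc: "l \<in> carrier G" and nc: "n \<in> carrier G" using l n Lc Nc by auto
    define c where "c = l \<otimes> n \<otimes> inv l \<otimes> inv n"
    have cC: "c \<in> C" using SC l n unfolding S_def c_def by blast
    have "ga_mult G (ee G l) (ee G n) = ga_mult G (ee G c) (dl G (n \<otimes> l)) + ga_mult G (ee G n) (ee G l)"
      using comm_id[OF fin lc nc] unfolding c_def by (simp add: diff_eq_eq)
    hence "ga_mult G (ga_mult G (ee G l) (ee G n)) r
        = ga_mult G (ga_mult G (ee G c) (dl G (n \<otimes> l)) + ga_mult G (ee G n) (ee G l)) r"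
      by (rule arg_cong[where f="\<lambda>x. ga_mult G x r"])
    also have "\<dots> = ga_mult G (ee G c) (ga_mult G (dl G (n \<otimes> l)) r) + ga_mult G (ga_mult G (ee G n) (ee G l)) r"
      by (simp only: ga_add_left ga_assoc[OF fin, of "ee G c"])
    finally have "ga_mult G (ga_mult G (ee G l) (ee G n)) r
        = ga_mult G (ee G c) (ga_mult G (dl G (n \<otimes> l)) r) + ga_mult G (ga_mult G (ee G n) (ee G l)) r" .
    moreover have "ga_mult G (ee G c) (ga_mult G (dl G (n \<otimes> l)) r) \<in> Zs"
      unfolding Zs_def by (rule sp_mult_prod[OF eeC[OF cC] inR])
    moreover have "ga_mult G (ga_mult G (ee G n) (ee G l)) r \<in> Ys"
      unfolding Ys_def by (rule sp_mult_prod[OF sp_mult_prod[OF eeN[OF n] eeL[OF l]] r])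
    ultimately show ?thesis by (simp add: sp_plus_I)
  qed
  have XW1: "Xs \<subseteq> sp_plus Zs Ys"
    unfolding Xs_def
  proof (rule sp_mult_least[OF aW1(1)])
    fix w r assume w: "w \<in> sp_mult G IL IN" and r: "r \<in> R"
    from w show "ga_mult G w r \<in> sp_plus Zs Ys"
    proof (induction w rule: sp_mult_induct)
      case zero thus ?case using aW1 by (simp add: addclD)
    next
      case (prod a b)
      define A' where "A' = (\<Sum>l\<in>L. sc (a l) (ee G l))"
      define B' where "B' = (\<Sum>n\<in>N. sc (b n) (ee G n))"
      have "a = A'" unfolding A'_def using aug_expand[OF fin Lc] prod(1) unfolding IL_def by blast
      moreover have "b = B'" unfolding B'_def using aug_expand[OF fin Nc] prod(2) unfolding IN_def by blast
      moreover have "ga_mult G (ga_mult G A' B') r = (\<Sum>n\<in>N. sc (b n) (\<Sum>l\<in>L. sc (a l) (ga_mult G (ga_mult G (ee G l) (ee G n)) r)))"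
        unfolding A'_def B'_def by (simp only: ga_sum_left ga_sum_right ga_sc_left ga_sc_right)
      moreover have "(\<Sum>n\<in>N. sc (b n) (\<Sum>l\<in>L. sc (a l) (ga_mult G (ga_mult G (ee G l) (ee G n)) r))) \<in> sp_plus Zs Ys"
        using Lc Nc fin finite_subset key1 r
        by (intro scl_sum[OF aW1]) (blast intro: scl_sum[OF aW1])+
      ultimately show ?case by simp
    next
      case (add f g) thus ?case using aW1 by (simp add: ga_add_left addclD)
    qed
  qed
  have YW1: "Ys \<subseteq> sp_plus Zs Ys" using sp_plus_ge2 aZ addclD by blast
  have key2: "ga_mult G (ee G s) r \<in> sp_plus Xs Ys" if s: "s \<in> S" and r: "r \<in> R" for s r
  proof -
    obtain l n where l: "l \<in> L" and n: "n \<in> N" and sd: "s = l \<otimes> n \<otimes> inv l \<otimes> inv n"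
      using s unfolding S_def by blast
    have lc: "l \<in> carrier G" and nc: "n \<in> carrier G" using l n Lc Nc by auto
    define r' where "r' = ga_mult G (dl G (inv (n \<otimes> l))) r"
    have rR: "r \<in> grp_alg G" using r unfolding R_def .
    have "r = ga_mult G (dl G (n \<otimes> l)) r'"
      unfolding r'_def using lc nc rR
      by (simp add: ga_assoc[OF fin, symmetric] ga_dl_dl[OF fin] ga_one_left[OF fin])
    hence "ga_mult G (ee G s) r = ga_mult G (ga_mult G (ee G s) (dl G (n \<otimes> l))) r'"
      by (simp add: ga_assoc[OF fin])
    also have "\<dots> = ga_mult G (ga_mult G (ee G l) (ee G n) - ga_mult G (ee G n) (ee G l)) r'"
      by (simp only: sd comm_id[OF fin lc nc])
    also have "\<dots> = ga_mult G (ga_mult G (ee G l) (ee G n)) r' + sc (-1) (ga_mult G (ga_mult G (ee G n) (ee G l)) r')"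
      by (simp add: ga_diff_left sc_m1)
    finally have eq: "ga_mult G (ee G s) r = \<dots>" .
    have "ga_mult G (ga_mult G (ee G l) (ee G n)) r' \<in> Xs"
      unfolding Xs_def r'_def by (rule sp_mult_prod[OF sp_mult_prod[OF eeL[OF l] eeN[OF n]] inR])
    moreover have "sc (-1) (ga_mult G (ga_mult G (ee G n) (ee G l)) r') \<in> Ys"
      using aY(2) unfolding scl_def Ys_def r'_def by (blast intro: sp_mult_prod[OF sp_mult_prod[OF eeN[OF n] eeL[OF l]] inR])
    ultimately show ?thesis unfolding eq by (rule sp_plus_I)
  qed
  have gen: "\<forall>r\<in>R. ga_mult G (ee G h) r \<in> sp_plus Xs Ys" if h: "h \<in> C" for h
    using h unfolding CS
  proof (induction h rule: generate.induct)
    case one thus ?case using aW2 by (simp add: addclD)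
  next
    case (incl h) thus ?case using key2 by blast
  next
    case (inv h)
    have hc: "h \<in> carrier G" using inv SC Cc by blast
    show ?case
    proof
      fix r assume r: "r \<in> R"
      have "ga_mult G (ee G (inv h)) r = sc (-1) (ga_mult G (ee G h) (ga_mult G (dl G (inv h)) r))"
        by (simp add: ee_inv[OF fin hc] sc_m1 ga_assoc[OF fin] ga_diff_left[of G 0, simplified])
      thus "ga_mult G (ee G (inv h)) r \<in> sp_plus Xs Ys"
        using key2[OF inv inR] aW2(2) unfolding scl_def by simp
    qed
  next
    case (eng h1 h2)
    have hc: "h1 \<in> carrier G" "h2 \<in> carrier G" using eng(1,2) Cc unfolding CS by blast+
    show ?case
    proof
      fix r assume r: "r \<in> R"
      have "ga_mult G (ee G (h1 \<otimes> h2)) r = ga_mult G (ee G h1) (ga_mult G (dl G h2) r) + ga_mult G (ee G h2) r"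
        by (simp add: ee_mult[OF fin hc] ga_add_left ga_assoc[OF fin])
      thus "ga_mult G (ee G (h1 \<otimes> h2)) r \<in> sp_plus Xs Ys"
        using eng.IH inR r aW2(1) by (simp add: addclD)
    qed
  qed
  have ZW2: "Zs \<subseteq> sp_plus Xs Ys"
    unfolding Zs_def
  proof (rule sp_mult_least[OF aW2(1)])
    fix a r :: "'a \<Rightarrow> 'k" assume a: "a \<in> aug_ideal G C" and r: "r \<in> R"
    define A' where "A' = (\<Sum>h\<in>C. sc (a h) (ee G h))"
    have "a = A'" unfolding A'_def using aug_expand[OF fin Cc a] .
    moreover have "ga_mult G A' r = (\<Sum>h\<in>C. sc (a h) (ga_mult G (ee G h) r))"
      unfolding A'_def by (simp only: ga_sum_left ga_sc_left)
    moreover have "(\<Sum>h\<in>C. sc (a h) (ga_mult G (ee G h) r)) \<in> sp_plus Xs Ys"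
      using Cc fin finite_subset gen r by (intro scl_sum[OF aW2]) blast+
    ultimately show "ga_mult G a r \<in> sp_plus Xs Ys" by simp
  qed
  have YW2: "Ys \<subseteq> sp_plus Xs Ys" using sp_plus_ge2 aX addclD by blast
  have "sp_plus Xs Ys = sp_plus Zs Ys"
    using sp_plus_least[OF aW1(1) XW1 YW1] sp_plus_least[OF aW2(1) ZW2 YW2] by blast
  thus ?thesis unfolding Xs_def Ys_def Zs_def R_def IL_def IN_def C_def .
qed

end



lemma sp_sum_0': "sp_sum f 0 = {0}" by (simp add: zero_fun_def)
declare sp_sum.simps(1)[simp del] sp_sum_0'[simp]

lemma sp_sum_zero: "(\<And>i. 0 \<in> f i) \<Longrightarrow> 0 \<in> sp_sum f n"
  by (induction n) (auto intro: sp_plus_I[of 0 _ 0, simplified])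

lemma sp_sum_addcl: "(\<And>i. addcl (f i)) \<Longrightarrow> addcl (sp_sum f n)"
proof (induction n)
  case 0 thus ?case by (simp add: addcl_def)
next
  case (Suc n) thus ?case by (simp add: addcl_sp_plus)
qed

lemma sp_sum_le:
  assumes "addcl C" "\<And>i. 1 \<le> i \<Longrightarrow> i \<le> n \<Longrightarrow> f i \<subseteq> C"
  shows "sp_sum f n \<subseteq> C"
  using assms(2)
proof (induction n)
  case 0 thus ?case using assms(1) by (simp add: addclD)
next
  case (Suc n) thus ?case using assms(1) by (simp add: sp_plus_least)
qed

lemma sp_sum_ge:
  assumes "\<And>i. 0 \<in> f i" "1 \<le> i" "i \<le> n"
  shows "f i \<subseteq> sp_sum f n"
  using assms(2,3)
proof (induction n)
  case 0 thus ?case by simp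
next
  case (Suc n)
  show ?case
  proof (cases "i = Suc n")
    case True thus ?thesis using sp_plus_ge2[OF sp_sum_zero[OF assms(1)]] by simp
  next
    case False
    hence "f i \<subseteq> sp_sum f n" using Suc by simp
    thus ?thesis using sp_plus_ge1[of "f (Suc n)"] assms(1) by auto
  qed
qed

lemma sp_mult_zero_right: "addcl C \<Longrightarrow> sp_mult G A {0} \<subseteq> C"
  by (rule sp_mult_least) (auto simp: addclD)
lemma sp_mult_zero_left: "addcl C \<Longrightarrow> sp_mult G {0} A \<subseteq> C"
  by (rule sp_mult_least) (auto simp: addclD)

lemma mult_left_sum:
  assumes "addcl C" "\<And>i. 1 \<le> i \<Longrightarrow> i \<le> n \<Longrightarrow> sp_mult G A (f i) \<subseteq> C"
  shows "sp_mult G A (sp_sum f n) \<subseteq> C"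
  using assms(2)
proof (induction n)
  case 0 thus ?case using assms(1) by (simp add: sp_mult_zero_right)
next
  case (Suc n)
  have "sp_mult G A (sp_sum f (Suc n)) \<subseteq> sp_plus (sp_mult G A (sp_sum f n)) (sp_mult G A (f (Suc n)))"
    by (simp add: sp_mult_plus_right)
  also have "\<dots> \<subseteq> C" using Suc assms(1) by (intro sp_plus_least) auto
  finally show ?case .
qed

lemma mult_right_sum:
  assumes "addcl C" "\<And>i. 1 \<le> i \<Longrightarrow> i \<le> n \<Longrightarrow> sp_mult G (f i) A \<subseteq> C"
  shows "sp_mult G (sp_sum f n) A \<subseteq> C"
  using assms(2)
proof (induction n)
  case 0 thus ?case using assms(1) by (simp add: sp_mult_zero_left)
next
  case (Suc n)
  have "sp_mult G (sp_sum f (Suc n)) A \<subseteq> sp_plus (sp_mult G (sp_sum f n) A) (sp_mult G (f (Suc n)) A)"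
    by (simp add: sp_mult_plus_left)
  also have "\<dots> \<subseteq> C" using Suc assms(1) by (intro sp_plus_least) auto
  finally show ?case .
qed

lemma sp_plus_zero_left: "sp_plus {0} P1 = P1"
  unfolding sp_plus_eq by auto

definition Mp :: "('g, 'b) monoid_scheme \<Rightarrow> ('g \<Rightarrow> 'k::field) set \<Rightarrow> nat \<Rightarrow> ('g \<Rightarrow> 'k) set \<Rightarrow> ('g \<Rightarrow> 'k) set" where
  "Mp G I m P1 = ((\<lambda>Q1. sp_mult G I Q1) ^^ m) P1"

lemma Mp_0[simp]: "Mp G I 0 P1 = P1" by (simp add: Mp_def)
lemma Mp_Suc: "Mp G I (Suc m) P1 = sp_mult G I (Mp G I m P1)" by (simp add: Mp_def)
lemma Mp_Suc': "Mp G I (Suc m) P1 = Mp G I m (sp_mult G I P1)" by (simp add: Mp_def funpow_Suc_right del: funpow.simps)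

lemma Mp_mono: "P1 \<subseteq> Q1 \<Longrightarrow> Mp G I m P1 \<subseteq> Mp G I m Q1"
  by (induction m) (auto simp: Mp_Suc intro: sp_mult_mono[THEN subsetD])

lemma Mp_addcl: "addcl P1 \<Longrightarrow> addcl (Mp G I m P1)"
  by (cases m) (auto simp: Mp_Suc addcl_sp_mult)

lemma Mp_plus: "Mp G I m (sp_plus P1 Q1) \<subseteq> sp_plus (Mp G I m P1) (Mp G I m Q1)"
proof (induction m)
  case 0 thus ?case by simp
next
  case (Suc m)
  have "Mp G I (Suc m) (sp_plus P1 Q1) \<subseteq> sp_mult G I (sp_plus (Mp G I m P1) (Mp G I m Q1))"
    unfolding Mp_Suc using Suc by (rule sp_mult_mono[OF order_refl])
  also have "\<dots> \<subseteq> sp_plus (Mp G I (Suc m) P1) (Mp G I (Suc m) Q1)"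
    unfolding Mp_Suc by (rule sp_mult_plus_right)
  finally show ?case .
qed

context group begin

lemma Mp_right:
  assumes fin: "finite (carrier G)"
  shows "sp_mult G (Mp G I m P1) Q1 = Mp G I m (sp_mult G P1 Q1)"
  by (induction m) (simp_all add: Mp_Suc sp_mult_assoc[OF fin])

lemma pow_mult:
  assumes fin: "finite (carrier G)"
  shows "sp_mult G (sp_pow G I m) P1 = Mp G I m (sp_mult G (grp_alg G) P1)"
  by (induction m) (simp_all add: Mp_Suc sp_mult_assoc[OF fin])

lemma bilin_mem:
  assumes W: "addcl W" "scl W" and F: "finite F1" "finite F2"
    and uv: "\<And>i j. i \<in> F1 \<Longrightarrow> j \<in> F2 \<Longrightarrow> ga_mult G (u i) (v j) \<in> W"
  shows "ga_mult G (\<Sum>i\<in>F1. sc (c i) (u i)) (\<Sum>j\<in>F2. sc (d j) (v j)) \<in> W"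
proof -
  have "ga_mult G (\<Sum>i\<in>F1. sc (c i) (u i)) (\<Sum>j\<in>F2. sc (d j) (v j))
      = (\<Sum>i\<in>F1. sc (c i) (ga_mult G (u i) (\<Sum>j\<in>F2. sc (d j) (v j))))"
    by (simp only: ga_sum_left ga_sc_left)
  also have "\<dots> = (\<Sum>i\<in>F1. sc (c i) (\<Sum>j\<in>F2. sc (d j) (ga_mult G (u i) (v j))))"
    by (simp only: ga_sum_right ga_sc_right)
  also have "\<dots> \<in> W"
    using F uv by (intro scl_sum[OF W]) (auto intro!: scl_sum[OF W])
  finally show ?thesis .
qed

lemma RI_IR:
  assumes fin: "finite (carrier G)" and H: "H \<lhd> G"
  shows "sp_mult G (grp_alg G) (aug_ideal G H) \<subseteq> sp_mult G (aug_ideal G H) (grp_alg G :: ('a \<Rightarrow> 'k::field) set)"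
    and "sp_mult G (aug_ideal G H) (grp_alg G) \<subseteq> sp_mult G (grp_alg G) (aug_ideal G H :: ('a \<Rightarrow> 'k::field) set)"
proof -
  have sg: "subgroup H G" and conj: "\<And>x h. x \<in> carrier G \<Longrightarrow> h \<in> H \<Longrightarrow> x \<otimes> h \<otimes> inv x \<in> H"
    using H normal_inv_iff by blast+
  have Hc: "H \<subseteq> carrier G" and H1: "\<one> \<in> H" using sg subgroup.subset subgroup.one_closed by blast+
  have fH: "finite H" using fin Hc finite_subset by blast
  let ?R = "grp_alg G :: ('a \<Rightarrow> 'k) set" and ?I = "aug_ideal G H :: ('a \<Rightarrow> 'k) set"
  have W1: "addcl (sp_mult G ?I ?R)" "scl (sp_mult G ?I ?R)" using addcl_sp_mult scl_sp_mult[OF scl_grp_alg] by blast+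
  have W2: "addcl (sp_mult G ?R ?I)" "scl (sp_mult G ?R ?I)" using addcl_sp_mult scl_sp_mult[OF scl_aug] by blast+
  show "sp_mult G ?R ?I \<subseteq> sp_mult G ?I ?R"
  proof (rule sp_mult_least[OF W1(1)])
    fix r a assume r: "r \<in> ?R" and a: "a \<in> ?I"
    have "ga_mult G r a = ga_mult G (\<Sum>g\<in>carrier G. sc (r g) (dl G g)) (\<Sum>h\<in>H. sc (a h) (ee G h))"
      using R_expand[OF fin r] aug_expand[OF fin Hc a] by simp
    also have "\<dots> \<in> sp_mult G ?I ?R"
    proof (rule bilin_mem[OF W1 fin fH])
      fix g h assume g: "g \<in> carrier G" and h: "h \<in> H"
      have hc: "h \<in> carrier G" using h Hc by blast
      have kc: "g \<otimes> h \<otimes> inv g \<in> carrier G" using g hc by simp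
      have "ga_mult G (dl G g) (ee G h) = dl G (g \<otimes> h) - dl G g"
        using g hc by (simp add: ee_def ga_diff_right ga_dl_dl[OF fin])
      also have "\<dots> = ga_mult G (ee G (g \<otimes> h \<otimes> inv g)) (dl G g)"
        using g hc by (simp add: ee_dl[OF fin kc g]) (simp add: m_assoc)
      finally have "ga_mult G (dl G g) (ee G h) = ga_mult G (ee G (g \<otimes> h \<otimes> inv g)) (dl G g)" .
      also have "\<dots> \<in> sp_mult G ?I ?R"
        by (rule sp_mult_prod[OF ee_in_aug[OF fin Hc H1 conj[OF g h]] dl_in[OF g]])
      finally show "ga_mult G (dl G g) (ee G h) \<in> sp_mult G ?I ?R" .
    qed
    finally show "ga_mult G r a \<in> sp_mult G ?I ?R" .
  qed
  show "sp_mult G ?I ?R \<subseteq> sp_mult G ?R ?I"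
  proof (rule sp_mult_least[OF W2(1)])
    fix a r assume r: "r \<in> ?R" and a: "a \<in> ?I"
    have "ga_mult G a r = ga_mult G (\<Sum>h\<in>H. sc (a h) (ee G h)) (\<Sum>g\<in>carrier G. sc (r g) (dl G g))"
      using R_expand[OF fin r] aug_expand[OF fin Hc a] by simp
    also have "\<dots> \<in> sp_mult G ?R ?I"
    proof (rule bilin_mem[OF W2 fH fin])
      fix g h assume g: "g \<in> carrier G" and h: "h \<in> H"
      have hc: "h \<in> carrier G" using h Hc by blast
      have ig: "inv g \<in> carrier G" using g by simp
      have kc: "inv g \<otimes> h \<otimes> g \<in> carrier G" using g hc by simp
      have "ga_mult G (ee G h) (dl G g) = dl G (h \<otimes> g) - dl G g"
        using g hc by (simp add: ee_dl[OF fin hc g])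
      also have "\<dots> = ga_mult G (dl G g) (ee G (inv g \<otimes> h \<otimes> g))"
        using g hc kc by (simp add: ee_def ga_diff_right ga_dl_dl[OF fin] m_assoc inv_cancel_left2)
      finally have "ga_mult G (ee G h) (dl G g) = ga_mult G (dl G g) (ee G (inv g \<otimes> h \<otimes> inv (inv g)))"
        using g by simp
      also have "\<dots> \<in> sp_mult G ?R ?I"
        by (rule sp_mult_prod[OF dl_in[OF g] ee_in_aug[OF fin Hc H1 conj[OF ig h]]])
      finally show "ga_mult G (ee G h) (dl G g) \<in> sp_mult G ?R ?I" .
    qed
    finally show "ga_mult G a r \<in> sp_mult G ?R ?I" .
  qed
qed

end



context group begin

lemma sum_ga:
  assumes fin: "finite (carrier G)"
  shows "sum (ga_mult G a b) (carrier G) = sum a (carrier G) * sum b (carrier G)"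
proof -
  have "sum (ga_mult G a b) (carrier G) = (\<Sum>x\<in>carrier G. \<Sum>y\<in>carrier G. a y * b (inv y \<otimes> x))"
    by (simp add: ga_mult_def)
  also have "\<dots> = (\<Sum>y\<in>carrier G. a y * (\<Sum>x\<in>carrier G. b (inv y \<otimes> x)))"
    by (subst sum.swap) (simp add: sum_distrib_left)
  also have "\<dots> = (\<Sum>y\<in>carrier G. a y * (\<Sum>z\<in>carrier G. b z))"
  proof (rule sum.cong[OF refl])
    fix y assume y: "y \<in> carrier G"
    have "(\<Sum>x\<in>carrier G. b (inv y \<otimes> x)) = (\<Sum>z\<in>carrier G. b z)"
      by (rule sum.reindex_bij_witness[where i="\<lambda>z. y \<otimes> z" and j="\<lambda>x. inv y \<otimes> x"])
         (use y in \<open>auto simp: inv_cancel_left inv_cancel_left2\<close>)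
    thus "a y * (\<Sum>x\<in>carrier G. b (inv y \<otimes> x)) = a y * (\<Sum>z\<in>carrier G. b z)" by simp
  qed
  also have "\<dots> = sum a (carrier G) * sum b (carrier G)" by (simp add: sum_distrib_right)
  finally show ?thesis .
qed

lemma augG_ideal:
  assumes fin: "finite (carrier G)"
  shows "sp_mult G (grp_alg G) (sp_mult G (aug_ideal G (carrier G)) (grp_alg G)) = (aug_ideal G (carrier G) :: ('a \<Rightarrow> 'k::field) set)"
proof
  let ?A = "aug_ideal G (carrier G) :: ('a \<Rightarrow> 'k) set"
  have m1: "ga_mult G a r \<in> ?A" if "a \<in> ?A" for a r :: "'a \<Rightarrow> 'k"
    using that sum_ga[OF fin, of a r] unfolding aug_ideal_def using ga_in[of G a r]
    by (auto simp: grp_alg_def)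
  have m2: "ga_mult G r a \<in> ?A" if "a \<in> ?A" for a r :: "'a \<Rightarrow> 'k"
    using that sum_ga[OF fin, of r a] unfolding aug_ideal_def using ga_in[of G r a]
    by (auto simp: grp_alg_def)
  have "sp_mult G (aug_ideal G (carrier G)) (grp_alg G) \<subseteq> ?A"
    by (rule sp_mult_least[OF addcl_aug]) (rule m1)
  thus "sp_mult G (grp_alg G) (sp_mult G (aug_ideal G (carrier G)) (grp_alg G)) \<subseteq> ?A"
    by (intro sp_mult_least[OF addcl_aug]) (auto intro: m2)
  show "?A \<subseteq> sp_mult G (grp_alg G) (sp_mult G ?A (grp_alg G))"
  proof
    fix a assume a: "a \<in> ?A"
    have aR: "a \<in> grp_alg G" using a aug_sub by blast
    have "a = ga_mult G (dl G \<one>) (ga_mult G a (dl G \<one>))"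
      using aR by (simp add: ga_one_left[OF fin] ga_one_right[OF fin] ga_in)
    also have "\<dots> \<in> sp_mult G (grp_alg G) (sp_mult G ?A (grp_alg G))"
      by (intro sp_mult_prod dl_in a) simp_all
    finally show "a \<in> sp_mult G (grp_alg G) (sp_mult G ?A (grp_alg G))" .
  qed
qed

lemma rel_lcs_sg:
  assumes "N \<subseteq> carrier G"
  shows "subgroup (rel_lcs G N i) G \<and> subgroup (rel_lcs G N (Suc i)) G"
proof (induction i)
  case 0 thus ?case by (simp add: subgroup_self)
next
  case (Suc i)
  hence "rel_lcs G N (Suc i) \<subseteq> carrier G" using subgroup.subset by blast
  thus ?case using Suc comm_subgroup_sub[OF _ assms] by simp
qed

end



context group begin

lemma part2:
  assumes fin: "finite (carrier G)" and NG: "N \<lhd> G"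
  shows "\<forall>n\<ge>1. (rel_J G N n :: ('a \<Rightarrow> 'k::field) set) =
           sp_sum (\<lambda>i. sp_mult G (sp_pow G (aug_ideal G N) (n + 1 - i))
                               (sp_mult G (aug_ideal G (rel_lcs G N i)) (grp_alg G))) n"
proof -
  define R where "R = (grp_alg G :: ('a \<Rightarrow> 'k) set)"
  define IN where "IN = (aug_ideal G N :: ('a \<Rightarrow> 'k) set)"
  define A where "A i = (aug_ideal G (rel_lcs G N i) :: ('a \<Rightarrow> 'k) set)" for i
  define Gm where "Gm i = sp_mult G (A i) R" for i
  define Gp where "Gp i = sp_mult G R (Gm i)" for i
  define T where "T n i = Mp G IN (n + 1 - i) (Gp i)" for n i
  define S where "S n = sp_sum (T n) n" for n
  have ASSOC: "\<And>A B C. sp_mult G (sp_mult G A B) C = sp_mult G A (sp_mult G B C)"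
    using sp_mult_assoc[OF fin] .
  have Nsub: "subgroup N G" using NG normal_imp_subgroup by blast
  have Nc: "N \<subseteq> carrier G" using Nsub subgroup.subset by blast
  have sg: "\<And>i. subgroup (rel_lcs G N i) G" using rel_lcs_sg[OF Nc] by blast
  have lcsS: "rel_lcs G N (Suc i) = comm_subgroup G (rel_lcs G N i) N" if "1 \<le> i" for i
    using that by (cases i) auto
  have P1: "sp_plus (sp_mult G (sp_mult G (A i) IN) R) (sp_mult G (sp_mult G IN (A i)) R)
          = sp_plus (Gm (Suc i)) (sp_mult G (sp_mult G IN (A i)) R)" if i: "1 \<le> i" for i
    using part1[OF fin sg Nsub, of i] unfolding A_def IN_def Gm_def R_def lcsS[OF i] .
  have RI: "sp_mult G R IN \<subseteq> sp_mult G IN R" and IR: "sp_mult G IN R \<subseteq> sp_mult G R IN"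
    unfolding R_def IN_def using RI_IR[OF fin NG] by blast+
  have aGp: "\<And>i. addcl (Gp i)" unfolding Gp_def by (rule addcl_sp_mult)
  have aT: "\<And>n i. addcl (T n i)" unfolding T_def using Mp_addcl aGp by blast
  have zT: "\<And>n i. 0 \<in> T n i" using aT addclD by blast
  have aS: "\<And>n. addcl (S n)" unfolding S_def using sp_sum_addcl aT by blast
  have zS: "\<And>n. 0 \<in> S n" using aS addclD by blast
  have TS: "T n i \<subseteq> S n" if "1 \<le> i" "i \<le> n" for n i
    unfolding S_def using sp_sum_ge[of "T n", OF zT that] .
  have aux: "sp_mult G R (sp_mult G (sp_mult G IN (A i)) R) \<subseteq> sp_mult G IN (Gp i)" for i
  proof -
    have "sp_mult G R (sp_mult G (sp_mult G IN (A i)) R) = sp_mult G (sp_mult G R IN) (Gm i)"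
      unfolding Gm_def by (simp add: ASSOC)
    also have "\<dots> \<subseteq> sp_mult G (sp_mult G IN R) (Gm i)" by (intro sp_mult_mono order_refl RI)
    also have "\<dots> = sp_mult G IN (Gp i)" unfolding Gp_def by (simp add: ASSOC)
    finally show ?thesis .
  qed
  have ge: "sp_mult G (sp_mult G (A i) IN) R \<subseteq> sp_plus (Gm (Suc i)) (sp_mult G (sp_mult G IN (A i)) R)"
    if i: "1 \<le> i" for i
    using sp_plus_ge1[OF sp_mult_zero, of "sp_mult G (sp_mult G (A i) IN) R" G "sp_mult G IN (A i)" R] P1[OF i]
    by simp
  have ge2: "Gm (Suc i) \<subseteq> sp_plus (sp_mult G (sp_mult G (A i) IN) R) (sp_mult G (sp_mult G IN (A i)) R)"
    if i: "1 \<le> i" for i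
    using sp_plus_ge1[OF sp_mult_zero, of "Gm (Suc i)" G "sp_mult G IN (A i)" R] P1[OF i]
    by simp
  have stepA: "sp_mult G (Gp i) IN \<subseteq> sp_plus (Gp (Suc i)) (sp_mult G IN (Gp i))" if i: "1 \<le> i" for i
  proof -
    have "sp_mult G (Gp i) IN = sp_mult G R (sp_mult G (A i) (sp_mult G R IN))"
      unfolding Gp_def Gm_def by (simp add: ASSOC)
    also have "\<dots> \<subseteq> sp_mult G R (sp_mult G (A i) (sp_mult G IN R))"
      by (intro sp_mult_mono order_refl RI)
    also have "\<dots> = sp_mult G R (sp_mult G (sp_mult G (A i) IN) R)" by (simp add: ASSOC)
    also have "\<dots> \<subseteq> sp_mult G R (sp_plus (Gm (Suc i)) (sp_mult G (sp_mult G IN (A i)) R))"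
      by (intro sp_mult_mono order_refl ge i)
    also have "\<dots> \<subseteq> sp_plus (sp_mult G R (Gm (Suc i))) (sp_mult G R (sp_mult G (sp_mult G IN (A i)) R))"
      by (rule sp_mult_plus_right)
    also have "\<dots> \<subseteq> sp_plus (Gp (Suc i)) (sp_mult G IN (Gp i))"
      unfolding Gp_def[of "Suc i"] by (intro sp_plus_mono order_refl aux)
    finally show ?thesis .
  qed
  have stepB: "Gp (Suc i) \<subseteq> sp_plus (sp_mult G (Gp i) IN) (sp_mult G IN (Gp i))" if i: "1 \<le> i" for i
  proof -
    have "Gp (Suc i) \<subseteq> sp_mult G R (sp_plus (sp_mult G (sp_mult G (A i) IN) R) (sp_mult G (sp_mult G IN (A i)) R))"
      unfolding Gp_def[of "Suc i"] by (intro sp_mult_mono order_refl ge2 i)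
    also have "\<dots> \<subseteq> sp_plus (sp_mult G R (sp_mult G (sp_mult G (A i) IN) R)) (sp_mult G R (sp_mult G (sp_mult G IN (A i)) R))"
      by (rule sp_mult_plus_right)
    also have "\<dots> \<subseteq> sp_plus (sp_mult G (Gp i) IN) (sp_mult G IN (Gp i))"
    proof (intro sp_plus_mono aux)
      have "sp_mult G R (sp_mult G (sp_mult G (A i) IN) R) = sp_mult G R (sp_mult G (A i) (sp_mult G IN R))"
        by (simp add: ASSOC)
      also have "\<dots> \<subseteq> sp_mult G R (sp_mult G (A i) (sp_mult G R IN))"
        by (intro sp_mult_mono order_refl IR)
      also have "\<dots> = sp_mult G (Gp i) IN" unfolding Gp_def Gm_def by (simp add: ASSOC)
      finally show "sp_mult G R (sp_mult G (sp_mult G (A i) IN) R) \<subseteq> sp_mult G (Gp i) IN" .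
    qed
    finally show ?thesis .
  qed
  have base1: "rel_J G N 1 = S 1"
  proof -
    have "S 1 = Mp G IN 1 (Gp 1)" unfolding S_def T_def by (simp add: sp_plus_zero_left)
    also have "\<dots> = sp_mult G IN (aug_ideal G (carrier G))"
      unfolding Gp_def Gm_def A_def R_def One_nat_def Mp_Suc Mp_0 rel_lcs.simps
      by (rule arg_cong[OF augG_ideal[OF fin]])
    also have "\<dots> = rel_J G N 1" unfolding IN_def by simp
    finally show ?thesis by simp
  qed
  have step: "rel_J G N (Suc n) = S (Suc n)" if n: "1 \<le> n" and IH: "rel_J G N n = S n" for n
  proof -
    have J: "rel_J G N (Suc n) = sp_plus (sp_mult G IN (S n)) (sp_mult G (S n) IN)"
      using n IH unfolding IN_def by (cases n) auto
    have aTg: "addcl (sp_plus (sp_mult G IN (S n)) (sp_mult G (S n) IN))"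
      by (intro addcl_sp_plus addcl_sp_mult)
    have L1: "sp_mult G IN (S n) \<subseteq> S (Suc n)"
      unfolding S_def[of n]
    proof (rule mult_left_sum[OF aS])
      fix i assume i: "1 \<le> i" "i \<le> n"
      have "sp_mult G IN (T n i) = T (Suc n) i"
        unfolding T_def using i by (simp add: Mp_Suc[symmetric] Suc_diff_le)
      also have "\<dots> \<subseteq> S (Suc n)" using i by (intro TS) auto
      finally show "sp_mult G IN (T n i) \<subseteq> S (Suc n)" .
    qed
    have L2: "sp_mult G (S n) IN \<subseteq> S (Suc n)"
      unfolding S_def[of n]
    proof (rule mult_right_sum[OF aS])
      fix i assume i: "1 \<le> i" "i \<le> n"
      define m where "m = n + 1 - i"
      have "sp_mult G (T n i) IN = Mp G IN m (sp_mult G (Gp i) IN)"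
        unfolding T_def m_def by (rule Mp_right[OF fin])
      also have "\<dots> \<subseteq> Mp G IN m (sp_plus (Gp (Suc i)) (sp_mult G IN (Gp i)))"
        by (intro Mp_mono stepA i)
      also have "\<dots> \<subseteq> sp_plus (Mp G IN m (Gp (Suc i))) (Mp G IN m (sp_mult G IN (Gp i)))"
        by (rule Mp_plus)
      also have "\<dots> = sp_plus (T (Suc n) (Suc i)) (T (Suc n) i)"
        unfolding T_def m_def using i by (simp add: Mp_Suc'[symmetric] Suc_diff_le)
      also have "\<dots> \<subseteq> S (Suc n)"
        using i by (intro sp_plus_least aS TS) auto
      finally show "sp_mult G (T n i) IN \<subseteq> S (Suc n)" .
    qed
    have L3: "S (Suc n) \<subseteq> sp_plus (sp_mult G IN (S n)) (sp_mult G (S n) IN)"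
      unfolding S_def[of "Suc n"]
    proof (rule sp_sum_le[OF aTg])
      fix i assume i: "1 \<le> i" "i \<le> Suc n"
      show "T (Suc n) i \<subseteq> sp_plus (sp_mult G IN (S n)) (sp_mult G (S n) IN)"
      proof (cases "i = 1")
        case True
        have "T (Suc n) i = sp_mult G IN (T n 1)" unfolding T_def True by (simp add: Mp_Suc)
        also have "\<dots> \<subseteq> sp_mult G IN (S n)" using n by (intro sp_mult_mono order_refl TS) auto
        also have "\<dots> \<subseteq> sp_plus (sp_mult G IN (S n)) (sp_mult G (S n) IN)"
          by (rule sp_plus_ge1[OF sp_mult_zero])
        finally show ?thesis .
      next
        case False
        then obtain j where j: "i = Suc j" "1 \<le> j" "j \<le> n" using i by (cases i) auto
        define m where "m = n + 1 - j"
        have "T (Suc n) i = Mp G IN m (Gp (Suc j))" unfolding T_def m_def j by simp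
        also have "\<dots> \<subseteq> Mp G IN m (sp_plus (sp_mult G (Gp j) IN) (sp_mult G IN (Gp j)))"
          by (intro Mp_mono stepB j)
        also have "\<dots> \<subseteq> sp_plus (Mp G IN m (sp_mult G (Gp j) IN)) (Mp G IN m (sp_mult G IN (Gp j)))"
          by (rule Mp_plus)
        also have "\<dots> = sp_plus (sp_mult G (T n j) IN) (sp_mult G IN (T n j))"
          unfolding T_def m_def by (simp add: Mp_right[OF fin] Mp_Suc'[symmetric] Mp_Suc)
        also have "\<dots> \<subseteq> sp_plus (sp_mult G IN (S n)) (sp_mult G (S n) IN)"
        proof (rule sp_plus_least[OF aTg])
          show "sp_mult G (T n j) IN \<subseteq> sp_plus (sp_mult G IN (S n)) (sp_mult G (S n) IN)"
          proof -
            have "sp_mult G (T n j) IN \<subseteq> sp_mult G (S n) IN" by (intro sp_mult_mono TS j order_refl)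
            thus ?thesis using sp_plus_ge2[OF sp_mult_zero, of "sp_mult G (S n) IN" G IN "S n"] by blast
          qed
          show "sp_mult G IN (T n j) \<subseteq> sp_plus (sp_mult G IN (S n)) (sp_mult G (S n) IN)"
          proof -
            have "sp_mult G IN (T n j) \<subseteq> sp_mult G IN (S n)" by (intro sp_mult_mono TS j order_refl)
            thus ?thesis using sp_plus_ge1[OF sp_mult_zero, of "sp_mult G IN (S n)" G "S n" IN] by blast
          qed
        qed
        finally show ?thesis .
      qed
    qed
    show ?thesis unfolding J using L1 L2 L3 by (intro antisym sp_plus_least aS) auto
  qed
  have main: "rel_J G N n = S n" if "1 \<le> n" for n
    using that
  proof (induction n rule: nat_induct_at_least)
    case base thus ?case by (rule base1)
  next
    case (Suc n) thus ?case using step by blast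
  qed
  have eqS: "(\<lambda>i. sp_mult G (sp_pow G (aug_ideal G N) (n + 1 - i))
                               (sp_mult G (aug_ideal G (rel_lcs G N i)) (grp_alg G))) = T n" for n
    unfolding T_def Gp_def Gm_def A_def R_def IN_def by (rule ext) (rule pow_mult[OF fin])
  show ?thesis using main unfolding eqS S_def by simp
qed

end

theorem mainTheorem8:
  fixes G :: "('g, 'b) monoid_scheme" and p :: nat and L N :: "'g set"
  assumes "group G" and "finite (carrier G)" and "Factorial_Ring.prime p"
    and "\<exists>m. card (carrier G) = p ^ m"
    and "card (UNIV :: 'k set) = p"
    and "L \<lhd> G" and "N \<lhd> G"
  shows "(sp_plus (sp_mult G (sp_mult G (aug_ideal G L :: ('g \<Rightarrow> 'k::field) set) (aug_ideal G N)) (grp_alg G))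
                 (sp_mult G (sp_mult G (aug_ideal G N) (aug_ideal G L)) (grp_alg G))
       = sp_plus (sp_mult G (aug_ideal G (comm_subgroup G L N)) (grp_alg G))
                 (sp_mult G (sp_mult G (aug_ideal G N) (aug_ideal G L)) (grp_alg G))) \<and>
      (\<forall>n\<ge>1. (rel_J G N n :: ('g \<Rightarrow> 'k) set) =
           sp_sum (\<lambda>i. sp_mult G (sp_pow G (aug_ideal G N) (n + 1 - i))
                               (sp_mult G (aug_ideal G (rel_lcs G N i)) (grp_alg G))) n)"
proof -
  interpret group G by (rule assms(1))
  have Ls: "subgroup L G" using assms(6) normal_imp_subgroup by blast
  have Ns: "subgroup N G" using assms(7) normal_imp_subgroup by blast
  show ?thesis using part1[OF assms(2) Ls Ns] part2[OF assms(2) assms(7)] by blast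
qed

end
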